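(* (a) For all $A,B\in\mathcal Q^{\vartriangle}$, $$A-^{\vartriangle}B=\bigcap_{z^*\in C^-\setminus\{0\}}\{z\in Z:\ \sigma^{\vartriangle}_A(z^* )-^{\vartriangle}\sigma^{\vartriangle}_B(z^* )\leq -z^*(z)\}.$$ If moreover $A=\{z\in Z: \sigma^{\vartriangle}_A(z^* )\leq -z^*(z)\}$ for some $z^*\in C^-\setminus\{0\}$, then $A-^{\vartriangle}B=\{z\in Z: \sigma^{\vartriangle}_A(z^* )-^{\vartriangle}\sigma^{\vartriangle}_B(z^* )\leq -z^*(z)\}$. (b) For all $A,B\in\mathcal Q^{\triangledown}$, $$A-^{\triangledown}B=\bigcap_{z^*\in C^-\setminus\{0\}}\{z\in Z:\ -z^*(z)\leq\sigma^{\triangledown}_A(z^* )-^{\triangledown}\sigma^{\triangledown}_B(z^* )\}.$$ If moreover $A=\{z\in Z: -z^*(z)\leq\sigma^{\triangledown}_A(z^* )\}$ for some $z^*\in C^-\setminus\{0\}$, then $A-^{\triangledown}B=\{z\in Z: -z^*(z)\leq\sigma^{\triangledown}_A(z^* )-^{\triangledown}\sigma^{\triangledown}_B(z^* )\}$.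
   Context: $Z$ is a separated locally convex space with dual $Z^*$; $C\subseteq Z$ is a convex cone with $0\in C$, and $C^-=\{z^*\in Z^*: z^*(z)\leq0\ \forall z\in C\}$, assumed to satisfy $C^-\neq\{0\}$. $\mathcal Q^{\vartriangle}=\{A\subseteq Z: A=\operatorname{cl}\operatorname{co}(A+C)\}$, $\mathcal Q^{\triangledown}=\{A\subseteq Z: A=\operatorname{cl}\operatorname{co}(A-C)\}$ (both contain $\emptyset$). Set differences: for $A,B\in\mathcal Q^{\vartriangle}$, $A-^{\vartriangle}B=\{z\in Z: B+\{z\}\subseteq A\}$; for $A,B\in\mathcal Q^{\triangledown}$, $A-^{\triangledown}B=\{z\in Z: B+\{z\}\subseteq A\}$. Support-type functions: $\sigma^{\vartriangle}_D(z^* )=\inf_{z\in D}(-z^*(z))$, $\sigma^{\triangledown}_D(z^* )=\sup_{z\in D}(-z^*(z))$ (with $\inf\emptyset=+\infty$, $\sup\emptyset=-\infty$). On $\overline{\mathbb R}=\mathbb R\cup\{\pm\infty\}$: inf-addition $r+^{\vartriangle}s=\inf\{a+b: a,b\in\mathbb R, r\leq a, s\leq b\}$, sup-addition $r+^{\triangledown}s=\sup\{a+b: a,b\in\mathbb R, a\leq r, b\leq s\}$, inf-difference $r-^{\vartriangle}s=\min\{t: r\leq s+^{\vartriangle}t\}$, sup-difference $r-^{\triangledown}s=\max\{t: s+^{\triangledown}t\leq r\}$. *)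

theory Defs
  imports "HOL-Analysis.Analysis" "HOL-Library.Extended_Real"
begin

definition locally_convex_tvs :: "'z::{real_vector, t2_space} itself \<Rightarrow> bool" where
  "locally_convex_tvs _ \<longleftrightarrow>
     continuous_on UNIV (\<lambda>p::'z \<times> 'z. fst p + snd p) \<and>
     continuous_on UNIV (\<lambda>p::real \<times> 'z. fst p *\<^sub>R snd p) \<and>
     (\<forall>U::'z set. open U \<and> 0 \<in> U \<longrightarrow> (\<exists>V. open V \<and> convex V \<and> 0 \<in> V \<and> V \<subseteq> U))"

definition dual_space :: "('z::{real_vector, topological_space} \<Rightarrow> real) set" where
  "dual_space = {f. linear f \<and> continuous_on UNIV f}"

definition neg_dual_cone :: "'z::{real_vector, topological_space} set \<Rightarrow> ('z \<Rightarrow> real) set" where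
  "neg_dual_cone C = {zs \<in> dual_space. \<forall>z\<in>C. zs z \<le> 0}"

definition set_plus_C :: "'z::real_vector set \<Rightarrow> 'z set \<Rightarrow> 'z set" where
  "set_plus_C A C = {a + c | a c. a \<in> A \<and> c \<in> C}"

definition set_minus_C :: "'z::real_vector set \<Rightarrow> 'z set \<Rightarrow> 'z set" where
  "set_minus_C A C = {a - c | a c. a \<in> A \<and> c \<in> C}"

definition Q_up :: "'z::{real_vector, topological_space} set \<Rightarrow> 'z set set" where
  "Q_up C = {A. A = closure (convex hull (set_plus_C A C))}"

definition Q_down :: "'z::{real_vector, topological_space} set \<Rightarrow> 'z set set" where
  "Q_down C = {A. A = closure (convex hull (set_minus_C A C))}"

text \<open>Set difference (same formula for both the inf- and sup-type spaces).\<close>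
definition set_diff :: "'z::real_vector set \<Rightarrow> 'z set \<Rightarrow> 'z set" where
  "set_diff A B = {z. {b + z | b. b \<in> B} \<subseteq> A}"

definition sigma_up :: "'z set \<Rightarrow> ('z \<Rightarrow> real) \<Rightarrow> ereal" where
  "sigma_up D zs = (INF z\<in>D. ereal (- zs z))"

definition sigma_down :: "'z set \<Rightarrow> ('z \<Rightarrow> real) \<Rightarrow> ereal" where
  "sigma_down D zs = (SUP z\<in>D. ereal (- zs z))"

definition inf_add :: "ereal \<Rightarrow> ereal \<Rightarrow> ereal" where
  "inf_add r s = Inf {ereal (a + b) | a b. r \<le> ereal a \<and> s \<le> ereal b}"

definition sup_add :: "ereal \<Rightarrow> ereal \<Rightarrow> ereal" where
  "sup_add r s = Sup {ereal (a + b) | a b. ereal a \<le> r \<and> ereal b \<le> s}"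

definition inf_diff :: "ereal \<Rightarrow> ereal \<Rightarrow> ereal" where
  "inf_diff r s = (LEAST t. r \<le> inf_add s t)"

definition sup_diff :: "ereal \<Rightarrow> ereal \<Rightarrow> ereal" where
  "sup_diff r s = (GREATEST t. sup_add s t \<le> r)"

end

theory Submission
  imports Defs
begin

definition sublin :: "('z::real_vector \<Rightarrow> real) \<Rightarrow> bool" where
  "sublin q \<longleftrightarrow> (\<forall>x y. q (x + y) \<le> q x + q y) \<and> (\<forall>s x. 0 < s \<longrightarrow> q (s *\<^sub>R x) = s * q x)"

lemma sublin_0: assumes "sublin q" shows "q 0 = 0"
proof -
  have "\<forall>s>0. \<forall>x. q (s *\<^sub>R x) = s * q x" using assms unfolding sublin_def by auto
  from this[rule_format, of 2 0] show ?thesis by simp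
qed

lemma sublin_neg: assumes "sublin q" shows "- q (- x) \<le> q x"
proof -
  have "q (x + - x) \<le> q x + q (-x)" using assms unfolding sublin_def by blast
  thus ?thesis using sublin_0[OF assms] by simp
qed

definition ext_fun :: "('z::real_vector \<Rightarrow> real) \<Rightarrow> 'z \<Rightarrow> real \<Rightarrow> 'z \<Rightarrow> real" where
  "ext_fun q x c y = Inf ((\<lambda>t. q (y + t *\<^sub>R x) - t * c) ` {0..})"

lemma ext_fun_props:
  assumes q: "sublin q" and c: "c \<le> q x"
  shows "sublin (ext_fun q x c)" "\<And>y. ext_fun q x c y \<le> q y" "ext_fun q x c (- x) \<le> - c"
proof -
  have sa: "\<And>a b. q (a + b) \<le> q a + q b" and hom: "\<And>s a. 0 < s \<Longrightarrow> q (s *\<^sub>R a) = s * q a"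
    using q unfolding sublin_def by auto
  have lb: "- q (- y) \<le> q (y + t *\<^sub>R x) - t * c" if "t \<ge> 0" for y t
  proof -
    have "q (t *\<^sub>R x) \<le> q (y + t *\<^sub>R x) + q (- y)" using sa[of "y + t *\<^sub>R x" "-y"] by simp
    moreover have "q (t *\<^sub>R x) \<ge> t * c"
    proof (cases "t = 0")
      case True thus ?thesis using sublin_0[OF q] by simp
    next
      case False thus ?thesis using hom[of t x] that c by (simp add: mult_left_mono)
    qed
    ultimately show ?thesis by linarith
  qed
  let ?S = "\<lambda>y. (\<lambda>t. q (y + t *\<^sub>R x) - t * c) ` {0..}"
  have bdd: "bdd_below (?S y)" for y using lb by (auto intro!: bdd_belowI[of _ "- q (-y)"])
  have ne: "?S y \<noteq> {}" for y by auto
  have low: "ext_fun q x c y \<le> q (y + t *\<^sub>R x) - t * c" if "t \<ge> 0" for y t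
    unfolding ext_fun_def by (rule cInf_lower[OF _ bdd]) (use that in auto)
  have great: "z \<le> ext_fun q x c y" if "\<And>t. t \<ge> 0 \<Longrightarrow> z \<le> q (y + t *\<^sub>R x) - t * c" for y z
    unfolding ext_fun_def by (rule cInf_greatest[OF ne]) (use that in auto)
  show le: "ext_fun q x c y \<le> q y" for y using low[of 0 y] by simp
  show "ext_fun q x c (- x) \<le> - c" using low[of 1 "-x"] sublin_0[OF q] by simp
  show "sublin (ext_fun q x c)"
    unfolding sublin_def
  proof (intro conjI allI impI)
    fix y1 y2
    have "ext_fun q x c (y1 + y2) - (q (y2 + t2 *\<^sub>R x) - t2 * c) \<le> ext_fun q x c y1" if t2: "t2 \<ge> 0" for t2
    proof (rule great)
      fix t1 :: real assume t1: "t1 \<ge> 0"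
      have "ext_fun q x c (y1 + y2) \<le> q (y1 + y2 + (t1 + t2) *\<^sub>R x) - (t1 + t2) * c"
        using low[of "t1 + t2" "y1 + y2"] t1 t2 by simp
      also have "q (y1 + y2 + (t1 + t2) *\<^sub>R x) \<le> q (y1 + t1 *\<^sub>R x) + q (y2 + t2 *\<^sub>R x)"
        using sa[of "y1 + t1 *\<^sub>R x" "y2 + t2 *\<^sub>R x"] by (simp add: algebra_simps)
      finally show "ext_fun q x c (y1 + y2) - (q (y2 + t2 *\<^sub>R x) - t2 * c) \<le> q (y1 + t1 *\<^sub>R x) - t1 * c"
        by (simp add: algebra_simps)
    qed
    hence "ext_fun q x c (y1 + y2) - ext_fun q x c y1 \<le> ext_fun q x c y2"
      by (intro great) (simp add: algebra_simps)
    thus "ext_fun q x c (y1 + y2) \<le> ext_fun q x c y1 + ext_fun q x c y2" by simp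
  next
    fix s :: real and y assume s: "0 < s"
    have "ext_fun q x c (s *\<^sub>R y) / s \<le> ext_fun q x c y"
    proof (rule great)
      fix t :: real assume t: "t \<ge> 0"
      have "ext_fun q x c (s *\<^sub>R y) \<le> q (s *\<^sub>R y + (s * t) *\<^sub>R x) - (s * t) * c"
        using low[of "s * t" "s *\<^sub>R y"] s t by simp
      also have "q (s *\<^sub>R y + (s * t) *\<^sub>R x) = s * q (y + t *\<^sub>R x)"
        using hom[OF s, of "y + t *\<^sub>R x"] by (simp add: algebra_simps)
      finally show "ext_fun q x c (s *\<^sub>R y) / s \<le> q (y + t *\<^sub>R x) - t * c"
        using s by (simp add: divide_simps algebra_simps)
    qed
    moreover have "s * ext_fun q x c y \<le> ext_fun q x c (s *\<^sub>R y)"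
    proof (rule great)
      fix t :: real assume t: "t \<ge> 0"
      have "ext_fun q x c y \<le> q (y + (t / s) *\<^sub>R x) - (t / s) * c"
        using low[of "t / s" y] s t by simp
      also have "s * q (y + (t / s) *\<^sub>R x) = q (s *\<^sub>R y + t *\<^sub>R x)"
        using hom[OF s, of "y + (t / s) *\<^sub>R x"] s by (simp add: algebra_simps)
      ultimately show "s * ext_fun q x c y \<le> q (s *\<^sub>R y + t *\<^sub>R x) - t * c"
        using s by (simp add: divide_simps algebra_simps)
    qed
    ultimately show "ext_fun q x c (s *\<^sub>R y) = s * ext_fun q x c y"
      using s by (simp add: divide_simps) (smt (verit, ccfv_SIG) mult.commute)
  qed
qed

lemma chain_inf:
  fixes \<mu> :: "'z::real_vector \<Rightarrow> real" and x0 :: 'z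
  defines "Fam \<equiv> {q. sublin q \<and> (\<forall>x. q x \<le> \<mu> x) \<and> q (- x0) \<le> - \<mu> x0}"
  assumes sub: "Ch \<subseteq> Fam" and ne: "Ch \<noteq> {}"
    and ch: "\<And>q1 q2. q1 \<in> Ch \<Longrightarrow> q2 \<in> Ch \<Longrightarrow> (\<forall>x. q1 x \<le> q2 x) \<or> (\<forall>x. q2 x \<le> q1 x)"
  shows "(\<lambda>x. Inf ((\<lambda>q. q x) ` Ch)) \<in> Fam \<and> (\<forall>q\<in>Ch. \<forall>x. Inf ((\<lambda>q. q x) ` Ch) \<le> q x)"
proof -
  define g where "g x = Inf ((\<lambda>q. q x) ` Ch)" for x
  have bdd: "bdd_below ((\<lambda>q. q x) ` Ch)" for x
  proof (rule bdd_belowI[of _ "- \<mu> (-x)"])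
    fix r assume "r \<in> (\<lambda>q. q x) ` Ch"
    then obtain q where q: "q \<in> Ch" "r = q x" by auto
    hence "sublin q" "q (-x) \<le> \<mu> (-x)" using sub unfolding Fam_def by auto
    thus "- \<mu> (-x) \<le> r" using sublin_neg[of q x] q by linarith
  qed
  have low: "g x \<le> q x" if "q \<in> Ch" for q x
    unfolding g_def by (rule cInf_lower[OF _ bdd]) (use that in auto)
  have great: "z \<le> g x" if "\<And>q. q \<in> Ch \<Longrightarrow> z \<le> q x" for z x
    unfolding g_def by (rule cInf_greatest) (use that ne in auto)
  have F: "sublin q" "\<And>x. q x \<le> \<mu> x" "q (- x0) \<le> - \<mu> x0" if "q \<in> Ch" for q
    using that sub unfolding Fam_def by auto
  obtain q0 where q0: "q0 \<in> Ch" using ne by auto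
  have "sublin g" unfolding sublin_def
  proof (intro conjI allI impI)
    fix x y
    have "g (x + y) - q2 y \<le> g x" if q2: "q2 \<in> Ch" for q2
    proof (rule great)
      fix q1 assume q1: "q1 \<in> Ch"
      have "g (x + y) \<le> q1 x + q2 y"
      proof (cases "\<forall>x. q1 x \<le> q2 x")
        case True
        have "g (x + y) \<le> q1 (x + y)" by (rule low[OF q1])
        also have "\<dots> \<le> q1 x + q1 y" using F(1)[OF q1] unfolding sublin_def by blast
        also have "\<dots> \<le> q1 x + q2 y" using True by auto
        finally show ?thesis .
      next
        case False
        hence T: "\<forall>x. q2 x \<le> q1 x" using ch[OF q1 q2] by auto
        have "g (x + y) \<le> q2 (x + y)" by (rule low[OF q2])
        also have "\<dots> \<le> q2 x + q2 y" using F(1)[OF q2] unfolding sublin_def by blast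
        also have "\<dots> \<le> q1 x + q2 y" using T by auto
        finally show ?thesis .
      qed
      thus "g (x + y) - q2 y \<le> q1 x" by simp
    qed
    hence "g (x + y) - g x \<le> g y" by (intro great) (simp add: algebra_simps)
    thus "g (x + y) \<le> g x + g y" by simp
  next
    fix s :: real and x assume s: "0 < s"
    have "g (s *\<^sub>R x) / s \<le> g x"
    proof (rule great)
      fix q assume q: "q \<in> Ch"
      have "g (s *\<^sub>R x) \<le> q (s *\<^sub>R x)" by (rule low[OF q])
      also have "\<dots> = s * q x" using F(1)[OF q] s unfolding sublin_def by blast
      finally show "g (s *\<^sub>R x) / s \<le> q x" using s by (simp add: divide_simps mult.commute)
    qed
    moreover have "s * g x \<le> g (s *\<^sub>R x)"
    proof (rule great)
      fix q assume q: "q \<in> Ch"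
      have "s * g x \<le> s * q x" using low[OF q] s by simp
      also have "\<dots> = q (s *\<^sub>R x)" using F(1)[OF q] s unfolding sublin_def by simp
      finally show "s * g x \<le> q (s *\<^sub>R x)" .
    qed
    ultimately show "g (s *\<^sub>R x) = s * g x"
      using s by (simp add: divide_simps) (smt (verit, ccfv_SIG) mult.commute)
  qed
  moreover have "g x \<le> \<mu> x" for x using low[OF q0, of x] F(2)[OF q0, of x] by linarith
  moreover have "g (- x0) \<le> - \<mu> x0" using low[OF q0, of "-x0"] F(3)[OF q0] by linarith
  ultimately have "g \<in> Fam" unfolding Fam_def by auto
  thus ?thesis using low unfolding g_def[abs_def] by auto
qed

lemma minimal_linear:
  assumes q: "sublin q" and minimal: "\<And>x. ext_fun q x (q x) = q"
  shows "linear q"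
proof -
  have neg: "q (- x) = - q x" for x
  proof -
    have "q (- x) \<le> - q x" using ext_fun_props(3)[OF q order_refl, of x] minimal[of x] by simp
    thus ?thesis using sublin_neg[OF q, of x] by linarith
  qed
  have sa: "q (a + b) \<le> q a + q b" for a b using q unfolding sublin_def by blast
  have add: "q (x + y) = q x + q y" for x y
  proof -
    have "q (- x + - y) \<le> q (-x) + q (-y)" by (rule sa)
    hence "- q (x + y) \<le> - q x - q y" using neg[of "x + y"] neg[of x] neg[of y] by (simp add: algebra_simps)
    thus ?thesis using sa[of x y] by linarith
  qed
  have sc: "q (s *\<^sub>R x) = s * q x" for s x
  proof (cases "s > 0")
    case True thus ?thesis using q unfolding sublin_def by blast
  next
    case False
    show ?thesis
    proof (cases "s = 0")
      case True thus ?thesis using sublin_0[OF q] by simp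
    next
      case False
      hence "- s > 0" using \<open>\<not> s > 0\<close> by simp
      hence "q ((- s) *\<^sub>R x) = (- s) * q x" using q unfolding sublin_def by blast
      thus ?thesis using neg[of "(- s) *\<^sub>R x"] by simp
    qed
  qed
  show ?thesis by (rule linearI) (simp_all add: add sc)
qed

lemma hahn_banach:
  fixes \<mu> :: "'z::real_vector \<Rightarrow> real"
  assumes mu: "sublin \<mu>"
  shows "\<exists>F. linear F \<and> (\<forall>x. F x \<le> \<mu> x) \<and> \<mu> x0 \<le> F x0"
proof -
  define Fam where "Fam = {q. sublin q \<and> (\<forall>x. q x \<le> \<mu> x) \<and> q (- x0) \<le> - \<mu> x0}"
  define E where "E q = {(x, r). q x \<le> r}" for q :: "'z \<Rightarrow> real"
  have Einj: "E q1 \<subseteq> E q2 \<longleftrightarrow> (\<forall>x. q2 x \<le> q1 x)" for q1 q2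
    unfolding E_def by (auto intro: order_trans)
  have init: "ext_fun \<mu> x0 (\<mu> x0) \<in> Fam"
    using ext_fun_props[OF mu order_refl, of x0] unfolding Fam_def by auto
  have "\<exists>M\<in>E ` Fam. \<forall>X\<in>E ` Fam. M \<subseteq> X \<longrightarrow> X = M"
  proof (rule Zorn_Lemma2, intro ballI)
    fix Cs assume Cs: "Cs \<in> chains (E ` Fam)"
    hence CsS: "Cs \<subseteq> E ` Fam" by (rule chainsD2)
    show "\<exists>U\<in>E ` Fam. \<forall>X\<in>Cs. X \<subseteq> U"
    proof (cases "Cs = {}")
      case True thus ?thesis using init by auto
    next
      case False
      define Ch where "Ch = {q \<in> Fam. E q \<in> Cs}"
      have ChF: "Ch \<subseteq> Fam" unfolding Ch_def by auto
      have Chne: "Ch \<noteq> {}" using False CsS unfolding Ch_def by auto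
      have "(\<forall>x. q1 x \<le> q2 x) \<or> (\<forall>x. q2 x \<le> q1 x)" if "q1 \<in> Ch" "q2 \<in> Ch" for q1 q2
        using chainsD[OF Cs, of "E q1" "E q2"] that unfolding Ch_def Einj by auto
      from chain_inf[of Ch \<mu> x0, folded Fam_def, OF ChF Chne this]
      obtain g where g: "g \<in> Fam" "\<forall>q\<in>Ch. \<forall>x. g x \<le> q x" by blast
      show ?thesis
      proof (intro bexI[of _ "E g"] ballI)
        fix X assume "X \<in> Cs"
        then obtain q where "q \<in> Fam" "X = E q" using CsS by auto
        moreover have "\<forall>x. g x \<le> q x" using g \<open>X \<in> Cs\<close> calculation unfolding Ch_def by auto
        ultimately show "X \<subseteq> E g" using Einj by blast
      qed (use g in auto)
    qed
  qed
  then obtain m where m: "m \<in> Fam" and max: "\<And>q. q \<in> Fam \<Longrightarrow> E m \<subseteq> E q \<Longrightarrow> E q = E m" by auto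
  have msub: "sublin m" using m unfolding Fam_def by auto
  have "ext_fun m x (m x) = m" for x
  proof -
    have P: "sublin (ext_fun m x (m x))" "\<And>y. ext_fun m x (m x) y \<le> m y"
      using ext_fun_props[OF msub order_refl, of x] by auto
    hence "ext_fun m x (m x) \<in> Fam" using m unfolding Fam_def by (auto intro: order_trans)
    moreover have "E m \<subseteq> E (ext_fun m x (m x))" using P(2) Einj by auto
    ultimately have "E (ext_fun m x (m x)) = E m" using max by blast
    hence "\<forall>y. ext_fun m x (m x) y \<le> m y \<and> m y \<le> ext_fun m x (m x) y" using Einj by (metis order_refl)
    thus ?thesis by (intro ext antisym) auto
  qed
  hence lin: "linear m" using minimal_linear[OF msub] by blast
  have "m (- x0) = - m x0" using lin by (simp add: linear_neg)
  thus ?thesis using lin m unfolding Fam_def by (intro exI[of _ m]) auto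
qed


lemma lcs_cont:
  assumes lcs: "locally_convex_tvs TYPE('z::{real_vector, t2_space})"
  shows "continuous_on UNIV (\<lambda>z::'z. a + z)" "continuous_on UNIV (\<lambda>z::'z. c *\<^sub>R z)"
    "continuous_on UNIV (\<lambda>s::real. s *\<^sub>R (x::'z))"
proof -
  have A: "continuous_on UNIV (\<lambda>p::'z \<times> 'z. fst p + snd p)"
    and S: "continuous_on UNIV (\<lambda>p::real \<times> 'z. fst p *\<^sub>R snd p)"
    using lcs unfolding locally_convex_tvs_def by auto
  show "continuous_on UNIV (\<lambda>z::'z. a + z)"
    using continuous_on_compose2[OF A continuous_on_Pair[OF continuous_on_const continuous_on_id], of a] by simp
  show "continuous_on UNIV (\<lambda>z::'z. c *\<^sub>R z)"
    using continuous_on_compose2[OF S continuous_on_Pair[OF continuous_on_const continuous_on_id], of c] by simp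
  show "continuous_on UNIV (\<lambda>s::real. s *\<^sub>R (x::'z))"
    using continuous_on_compose2[OF S continuous_on_Pair[OF continuous_on_id continuous_on_const], of x] by simp
qed

lemma lcs_absorb:
  assumes lcs: "locally_convex_tvs TYPE('z::{real_vector, t2_space})"
    and N: "open (N::'z set)" "0 \<in> N"
  shows "\<exists>d>0. \<forall>s. \<bar>s\<bar> < d \<longrightarrow> s *\<^sub>R x \<in> N"
proof -
  have "open ((\<lambda>s::real. s *\<^sub>R x) -` N)"
    by (rule open_vimage[OF N(1) lcs_cont(3)[OF lcs]])
  moreover have "0 \<in> (\<lambda>s::real. s *\<^sub>R x) -` N" using N by simp
  ultimately obtain e where "e > 0" "\<And>y. dist y 0 < e \<Longrightarrow> y \<in> (\<lambda>s::real. s *\<^sub>R x) -` N"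
    unfolding open_dist by blast
  thus ?thesis by (intro exI[of _ e]) auto
qed

lemma minkowski:
  fixes U :: "'z::real_vector set"
  assumes cvx: "convex U" and U0: "0 \<in> U" and abs: "\<And>x. \<exists>t>0. inverse t *\<^sub>R x \<in> U"
  shows "\<exists>\<mu>. sublin \<mu> \<and> (\<forall>x\<in>U. \<mu> x \<le> 1) \<and> (\<forall>x. x \<notin> U \<longrightarrow> 1 \<le> \<mu> x)"
proof -
  define S where "S x = {t. 0 < t \<and> inverse t *\<^sub>R x \<in> U}" for x
  define \<mu> where "\<mu> x = Inf (S x)" for x
  have ne: "S x \<noteq> {}" for x using abs[of x] unfolding S_def by auto
  have bdd: "bdd_below (S x)" for x unfolding S_def by (auto intro: bdd_belowI[of _ 0])
  have low: "\<mu> x \<le> t" if "t \<in> S x" for x t unfolding \<mu>_def by (rule cInf_lower[OF that bdd])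
  have great: "z \<le> \<mu> x" if "\<And>t. t \<in> S x \<Longrightarrow> z \<le> t" for z x
    unfolding \<mu>_def by (rule cInf_greatest[OF ne]) (use that in auto)
  have sub: "sublin \<mu>" unfolding sublin_def
  proof (intro conjI allI impI)
    fix x y
    have add: "t1 + t2 \<in> S (x + y)" if t1: "t1 \<in> S x" and t2: "t2 \<in> S y" for t1 t2
    proof -
      have p: "t1 > 0" "t2 > 0" "inverse t1 *\<^sub>R x \<in> U" "inverse t2 *\<^sub>R y \<in> U" using t1 t2 unfolding S_def by auto
      have "(t1 / (t1 + t2)) *\<^sub>R (inverse t1 *\<^sub>R x) + (t2 / (t1 + t2)) *\<^sub>R (inverse t2 *\<^sub>R y) \<in> U"
        by (rule convexD[OF cvx p(3) p(4)]) (use p in \<open>auto simp: divide_simps\<close>)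
      moreover have "(t1 / (t1 + t2)) *\<^sub>R (inverse t1 *\<^sub>R x) + (t2 / (t1 + t2)) *\<^sub>R (inverse t2 *\<^sub>R y)
          = inverse (t1 + t2) *\<^sub>R (x + y)"
        using p by (simp add: scaleR_add_right divide_simps)
      ultimately show ?thesis using p unfolding S_def by auto
    qed
    have "\<mu> (x + y) - t2 \<le> \<mu> x" if t2: "t2 \<in> S y" for t2
      using low[OF add[OF _ t2]] by (intro great) (smt (verit))
    hence "\<mu> (x + y) - \<mu> x \<le> \<mu> y" by (intro great) (simp add: algebra_simps)
    thus "\<mu> (x + y) \<le> \<mu> x + \<mu> y" by simp
  next
    fix s :: real and x assume s: "0 < s"
    have m1: "s * t \<in> S (s *\<^sub>R x)" if "t \<in> S x" for t
    proof -
      have eq: "inverse (s * t) *\<^sub>R (s *\<^sub>R x) = inverse t *\<^sub>R x" using s by simp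
      have h: "0 < t" "inverse t *\<^sub>R x \<in> U" using that unfolding S_def by auto
      have "inverse (s * t) *\<^sub>R (s *\<^sub>R x) \<in> U" unfolding eq by (rule h(2))
      thus ?thesis using h s unfolding S_def by auto
    qed
    have m2: "t / s \<in> S x" if "t \<in> S (s *\<^sub>R x)" for t using that s unfolding S_def by (auto simp: field_simps)
    have "\<mu> (s *\<^sub>R x) / s \<le> \<mu> x"
      by (rule great) (use s low[OF m1] in \<open>auto simp: divide_simps mult.commute\<close>)
    moreover have "s * \<mu> x \<le> \<mu> (s *\<^sub>R x)"
      by (rule great) (use s low[OF m2] in \<open>auto simp: divide_simps mult.commute\<close>)
    ultimately show "\<mu> (s *\<^sub>R x) = s * \<mu> x"
      using s by (simp add: divide_simps) (smt (verit, ccfv_SIG) mult.commute)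
  qed
  have le1: "\<mu> x \<le> 1" if "x \<in> U" for x using low[of 1 x] that unfolding S_def by auto
  have ge1: "1 \<le> \<mu> x" if "x \<notin> U" for x
  proof (rule ccontr)
    assume "\<not> 1 \<le> \<mu> x"
    then obtain t where t: "t \<in> S x" "t < 1" using cInf_lessD[OF ne[of x], of 1] unfolding \<mu>_def by auto
    hence tp: "0 < t" "inverse t *\<^sub>R x \<in> U" unfolding S_def by auto
    have "t *\<^sub>R (inverse t *\<^sub>R x) + (1 - t) *\<^sub>R 0 \<in> U"
      by (rule convexD[OF cvx tp(2) U0]) (use tp t in auto)
    thus False using tp that by simp
  qed
  show ?thesis using sub le1 ge1 by blast
qed

lemma lin_cont:
  assumes lcs: "locally_convex_tvs TYPE('z::{real_vector, t2_space})"
    and F: "linear (F :: 'z \<Rightarrow> real)" and N: "open (N::'z set)" "0 \<in> N" and bd: "\<And>n. n \<in> N \<Longrightarrow> \<bar>F n\<bar> \<le> 1"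
  shows "continuous_on UNIV F"
  unfolding continuous_on_topological
proof (intro ballI allI impI)
  fix x B assume B: "open B" "F x \<in> B"
  then obtain e where e: "e > 0" "\<And>y. dist y (F x) < e \<Longrightarrow> y \<in> B" unfolding open_dist by blast
  define c where "c = 2 / e"
  have c: "c > 0" using e unfolding c_def by auto
  have gc: "continuous_on UNIV (\<lambda>z. (- (c *\<^sub>R x)) + c *\<^sub>R z)"
    using continuous_on_compose2[OF lcs_cont(1)[OF lcs, of "- (c *\<^sub>R x)"] lcs_cont(2)[OF lcs, of c]] by simp
  define A where "A = (\<lambda>z. (- (c *\<^sub>R x)) + c *\<^sub>R z) -` N"
  have "open A" unfolding A_def by (rule open_vimage[OF N(1) gc])
  moreover have "x \<in> A" using N(2) unfolding A_def by simp
  moreover have "F y \<in> B" if "y \<in> A" for y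
  proof -
    have "(- (c *\<^sub>R x)) + c *\<^sub>R y = c *\<^sub>R (y - x)" by (simp add: scaleR_diff_right)
    hence "\<bar>F (c *\<^sub>R (y - x))\<bar> \<le> 1" using bd that unfolding A_def by auto
    hence "\<bar>c * F y - c * F x\<bar> \<le> 1" using F c by (simp add: linear_cmul linear_diff abs_mult)
    moreover have "\<bar>c * F y - c * F x\<bar> = c * \<bar>F y - F x\<bar>" using c by (simp add: abs_mult right_diff_distrib[symmetric])
    ultimately have "c * \<bar>F y - F x\<bar> \<le> 1" by simp
    hence "\<bar>F y - F x\<bar> \<le> e / 2" using c e unfolding c_def by (simp add: field_simps)
    hence "dist (F y) (F x) < e" using e by (simp add: dist_real_def)
    thus ?thesis using e by auto
  qed
  ultimately show "\<exists>A. open A \<and> x \<in> A \<and> (\<forall>y\<in>UNIV. y \<in> A \<longrightarrow> F y \<in> B)" by blast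
qed

lemma separation:
  assumes lcs: "locally_convex_tvs TYPE('z::{real_vector, t2_space})"
    and K: "convex (K::'z set)" "K \<noteq> {}" and p: "p \<notin> closure K"
  shows "\<exists>(F::'z\<Rightarrow>real) c. linear F \<and> continuous_on UNIV F \<and> (\<forall>a\<in>closure K. F a \<le> c) \<and> c < F p"
proof -
  define Ob where "Ob = (\<lambda>z. p + z) -` (- closure K)"
  have "open Ob" unfolding Ob_def by (rule open_vimage[OF _ lcs_cont(1)[OF lcs]]) auto
  moreover have "0 \<in> Ob" using p unfolding Ob_def by auto
  ultimately obtain V where V: "open V" "convex V" "0 \<in> V" "V \<subseteq> Ob"
    using lcs unfolding locally_convex_tvs_def by meson
  have linneg: "linear (\<lambda>z::'z. - z)" by (rule linearI) auto
  define N where "N = V \<inter> (\<lambda>z. (-1::real) *\<^sub>R z) -` V"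
  have Nopen: "open N" unfolding N_def by (intro open_Int V(1) open_vimage[OF V(1) lcs_cont(2)[OF lcs]])
  have Nconv: "convex N" unfolding N_def using convex_linear_vimage[OF linneg V(2)] V(2)
    by (simp add: convex_Int vimage_def)
  have N0: "0 \<in> N" using V unfolding N_def by auto
  have Nsym: "- n \<in> N" if "n \<in> N" for n using that unfolding N_def by auto
  have NO: "p + n \<notin> closure K" if "n \<in> N" for n using that V(4) unfolding N_def Ob_def by auto
  obtain a0 where a0: "a0 \<in> K" using K(2) by auto
  define U where "U = {k - a0 - n | k n. k \<in> K \<and> n \<in> N}"
  have Uconv: "convex U" unfolding convex_def
  proof (intro ballI allI impI)
    fix x y :: 'z and u v :: real assume xy: "x \<in> U" "y \<in> U" and uv: "0 \<le> u" "0 \<le> v" "u + v = 1"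
    obtain k1 n1 where 1: "x = k1 - a0 - n1" "k1 \<in> K" "n1 \<in> N" using xy(1) unfolding U_def by auto
    obtain k2 n2 where 2: "y = k2 - a0 - n2" "k2 \<in> K" "n2 \<in> N" using xy(2) unfolding U_def by auto
    have "u *\<^sub>R k1 + v *\<^sub>R k2 \<in> K" by (rule convexD[OF K(1) 1(2) 2(2) uv])
    moreover have "u *\<^sub>R n1 + v *\<^sub>R n2 \<in> N" by (rule convexD[OF Nconv 1(3) 2(3) uv])
    moreover have "u *\<^sub>R x + v *\<^sub>R y = (u *\<^sub>R k1 + v *\<^sub>R k2) - a0 - (u *\<^sub>R n1 + v *\<^sub>R n2)"
    proof -
      have "u *\<^sub>R x + v *\<^sub>R y = (u *\<^sub>R k1 + v *\<^sub>R k2) - (u + v) *\<^sub>R a0 - (u *\<^sub>R n1 + v *\<^sub>R n2)"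
        unfolding 1 2 by (simp add: algebra_simps)
      thus ?thesis using uv by simp
    qed
    ultimately show "u *\<^sub>R x + v *\<^sub>R y \<in> U" unfolding U_def by blast
  qed
  have NU: "n \<in> U" if "n \<in> N" for n
  proof -
    have "n = a0 - a0 - (- n)" by simp
    thus ?thesis using a0 Nsym[OF that] unfolding U_def by blast
  qed
  have U0: "0 \<in> U" using NU N0 by auto
  have absU: "\<exists>t>0. inverse t *\<^sub>R x \<in> U" for x
  proof -
    obtain d where d: "d > 0" "\<And>s. \<bar>s\<bar> < d \<Longrightarrow> s *\<^sub>R x \<in> N" using lcs_absorb[OF lcs Nopen N0] by blast
    have "(d / 2) *\<^sub>R x \<in> N" using d by auto
    thus ?thesis using d NU by (intro exI[of _ "2 / d"]) auto
  qed
  obtain \<mu> where mu: "sublin \<mu>" "\<And>x. x \<in> U \<Longrightarrow> \<mu> x \<le> 1" "\<And>x. x \<notin> U \<Longrightarrow> 1 \<le> \<mu> x"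
    using minkowski[OF Uconv U0 absU] by blast
  define x0 where "x0 = p - a0"
  have x0U: "x0 \<notin> U"
  proof
    assume "x0 \<in> U"
    then obtain k n where "x0 = k - a0 - n" "k \<in> K" "n \<in> N" unfolding U_def by auto
    hence "p + n = k" "p + n \<notin> closure K" using NO unfolding x0_def by (auto simp: algebra_simps)
    thus False using \<open>k \<in> K\<close> closure_subset by auto
  qed
  obtain F where F: "linear F" "\<And>x. F x \<le> \<mu> x" "\<mu> x0 \<le> F x0" using hahn_banach[OF mu(1), of x0] by blast
  have Fx0: "1 \<le> F x0" using mu(3)[OF x0U] F(3) by linarith
  have bd: "\<bar>F n\<bar> \<le> 1" if "n \<in> N" for n
  proof -
    have "F n \<le> 1" using F(2)[of n] mu(2)[OF NU[OF that]] by linarith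
    moreover have "F (- n) \<le> 1" using F(2)[of "-n"] mu(2)[OF NU[OF Nsym[OF that]]] by linarith
    ultimately show ?thesis using F(1) by (simp add: linear_neg)
  qed
  have cont: "continuous_on UNIV F" by (rule lin_cont[OF lcs F(1) Nopen N0 bd])
  obtain d where d: "d > 0" "\<And>s. \<bar>s\<bar> < d \<Longrightarrow> s *\<^sub>R x0 \<in> N" using lcs_absorb[OF lcs Nopen N0] by blast
  define t where "t = d / 2"
  have t: "t > 0" "- (t *\<^sub>R x0) \<in> N" using d Nsym unfolding t_def by auto
  define c where "c = 1 + F a0 - t * F x0"
  have Kc: "F k \<le> c" if "k \<in> K" for k
  proof -
    have "k - a0 - (- (t *\<^sub>R x0)) \<in> U" using that t unfolding U_def by blast
    hence "F (k - a0 - (- (t *\<^sub>R x0))) \<le> 1" using F(2) mu(2) by (meson order_trans)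
    thus ?thesis using F(1) unfolding c_def by (simp add: linear_diff linear_add linear_cmul linear_neg)
  qed
  have "closure K \<subseteq> {x. F x \<le> c}"
    by (rule closure_minimal) (use Kc closed_Collect_le[OF cont continuous_on_const] in auto)
  moreover have "c < F p"
  proof -
    have "F p = F x0 + F a0" using F(1) unfolding x0_def by (simp add: linear_diff)
    moreover have "t * F x0 > 0" using t Fx0 by simp
    ultimately show ?thesis unfolding c_def using Fx0 by linarith
  qed
  ultimately show ?thesis using F(1) cont by (intro exI[of _ F] exI[of _ c]) auto
qed


lemma inf_add_eq: "inf_add s t = s + t"
proof -
  define A where "A = {ereal (a + b) | a b. s \<le> ereal a \<and> t \<le> ereal b}"
  have "Inf A = s + t"
  proof (cases "s = \<infinity> \<or> t = \<infinity>")
    case True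
    hence "A = {}" unfolding A_def by auto
    thus ?thesis using True by (auto simp: top_ereal_def)
  next
    case False
    show ?thesis
    proof (cases "s = -\<infinity> \<or> t = -\<infinity>")
      case True
      define b0 where "b0 = max (real_of_ereal s) (real_of_ereal t)"
      have b0: "s \<le> ereal b0" "t \<le> ereal b0" using False unfolding b0_def by (cases s; cases t; auto)+
      have "Inf A \<le> ereal r" for r
      proof -
        have "ereal (r - b0 + b0) \<in> A"
        proof (cases "s = -\<infinity>")
          case True thus ?thesis unfolding A_def using b0 by (intro CollectI exI[of _ "r - b0"] exI[of _ b0]) auto
        next
          case False
          hence "t = -\<infinity>" using \<open>s = -\<infinity> \<or> t = -\<infinity>\<close> by auto
          thus ?thesis unfolding A_def using b0 by (intro CollectI exI[of _ "b0"] exI[of _ "r - b0"]) auto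
        qed
        thus ?thesis by (metis Inf_lower diff_add_cancel)
      qed
      hence "Inf A = -\<infinity>" by (rule ereal_bot)
      thus ?thesis using True False by auto
    next
      case False2: False
      then obtain x y where xy: "s = ereal x" "t = ereal y" using False by (cases s; cases t) auto
      have "ereal (x + y) \<in> A" unfolding A_def xy by auto
      moreover have "ereal (x + y) \<le> i" if "i \<in> A" for i using that unfolding A_def xy by auto
      ultimately have "Inf A = ereal (x + y)" by (meson Inf_greatest Inf_lower antisym)
      thus ?thesis using xy by simp
    qed
  qed
  thus ?thesis unfolding inf_add_def A_def .
qed

lemma sup_add_eq: "sup_add s t = - (- s + - t)"
proof -
  have "{ereal (a + b) | a b. ereal a \<le> s \<and> ereal b \<le> t} = uminus ` {ereal (a + b) | a b. - s \<le> ereal a \<and> - t \<le> ereal b}"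
    (is "?L = uminus ` ?R")
  proof
    show "?L \<subseteq> uminus ` ?R"
    proof
      fix v assume "v \<in> ?L"
      then obtain a b where "v = ereal (a + b)" "ereal a \<le> s" "ereal b \<le> t" by auto
      moreover have "- s \<le> ereal (- a)" "- t \<le> ereal (- b)" using calculation by (cases s; cases t; auto)+
      ultimately have "ereal (- a + - b) \<in> ?R" "v = - ereal (- a + - b)"
        by (blast, simp)
      thus "v \<in> uminus ` ?R" by blast
    qed
  next
    show "uminus ` ?R \<subseteq> ?L"
    proof
      fix v assume "v \<in> uminus ` ?R"
      then obtain a b where "v = - ereal (a + b)" "- s \<le> ereal a" "- t \<le> ereal b" by auto
      moreover have "ereal (- a) \<le> s" "ereal (- b) \<le> t" using calculation by (cases s; cases t; auto)+
      ultimately have "v = ereal (- a + - b)" "ereal (- a) \<le> s" "ereal (- b) \<le> t" by auto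
      thus "v \<in> ?L" by blast
    qed
  qed
  hence "sup_add s t = Sup (uminus ` ?R)" unfolding sup_add_def by simp
  also have "\<dots> = - Inf ?R" by (simp add: ereal_Sup_uminus_image_eq)
  also have "Inf ?R = inf_add (-s) (-t)" unfolding inf_add_def by simp
  finally show ?thesis by (simp add: inf_add_eq)
qed

lemma inf_diff_le: "inf_diff a s \<le> u \<longleftrightarrow> a \<le> s + u"
proof -
  have "\<exists>t0. \<forall>t. (a \<le> s + t \<longleftrightarrow> t0 \<le> t)"
  proof (cases s)
    case (real x) thus ?thesis by (intro exI[of _ "a - ereal x"] allI, case_tac a; case_tac t; auto)
  next
    case PInf thus ?thesis by (intro exI[of _ "-\<infinity>"]) auto
  next
    case MInf thus ?thesis by (intro exI[of _ "if a = -\<infinity> then -\<infinity> else \<infinity>"] allI, case_tac a; case_tac t; auto)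
  qed
  then obtain t0 where t0: "\<And>t. a \<le> s + t \<longleftrightarrow> t0 \<le> t" by blast
  have "inf_diff a s = t0" unfolding inf_diff_def inf_add_eq
    by (rule Least_equality) (use t0 in auto)
  thus ?thesis using t0 by simp
qed

lemma sup_diff_ge: "u \<le> sup_diff r s \<longleftrightarrow> sup_add s u \<le> r"
proof -
  have "\<exists>t1. \<forall>t. (- (- s + - t) \<le> r \<longleftrightarrow> t \<le> t1)"
  proof (cases s)
    case (real x) thus ?thesis by (intro exI[of _ "r - ereal x"] allI, case_tac r; case_tac t; auto)
  next
    case MInf thus ?thesis by (intro exI[of _ "\<infinity>"]) auto
  next
    case PInf thus ?thesis by (intro exI[of _ "if r = \<infinity> then \<infinity> else -\<infinity>"] allI, case_tac r; case_tac t; auto)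
  qed
  then obtain t1 where t1: "\<And>t. - (- s + - t) \<le> r \<longleftrightarrow> t \<le> t1" by blast
  have "sup_diff r s = t1" unfolding sup_diff_def sup_add_eq
    by (rule Greatest_equality) (use t1 in auto)
  thus ?thesis using t1 sup_add_eq by simp
qed

lemma sup_add_real: "sup_add s (ereal w) = s + ereal w"
  unfolding sup_add_eq by (cases s) auto

lemma INF_plus_iff:
  fixes f :: "'a \<Rightarrow> ereal"
  shows "(\<forall>b\<in>B. a \<le> f b + ereal w) \<longleftrightarrow> a \<le> (INF b\<in>B. f b) + ereal w"
proof -
  have e: "a \<le> x + ereal w \<longleftrightarrow> a - ereal w \<le> x" for x by (cases a; cases x) auto
  show ?thesis unfolding e by (simp add: le_INF_iff)
qed

lemma SUP_plus_iff:
  fixes f :: "'a \<Rightarrow> ereal"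
  shows "(\<forall>b\<in>B. f b + ereal w \<le> a) \<longleftrightarrow> (SUP b\<in>B. f b) + ereal w \<le> a"
proof -
  have e: "x + ereal w \<le> a \<longleftrightarrow> x \<le> a - ereal w" for x by (cases a; cases x) auto
  show ?thesis unfolding e by (simp add: SUP_le_iff)
qed


lemma set_diff_iff: "z \<in> set_diff A B \<longleftrightarrow> (\<forall>b\<in>B. b + z \<in> A)"
  unfolding set_diff_def by blast

lemma key_up:
  assumes "linear zs"
  shows "(\<forall>b\<in>B. b + z \<in> {x. sigma_up A zs \<le> ereal (- zs x)}) \<longleftrightarrow>
         inf_diff (sigma_up A zs) (sigma_up B zs) \<le> ereal (- zs z)"
proof -
  have e: "ereal (- zs (b + z)) = ereal (- zs b) + ereal (- zs z)" for b
    using assms by (simp add: linear_add)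
  show ?thesis unfolding inf_diff_le sigma_up_def[of B] mem_Collect_eq e INF_plus_iff ..
qed

lemma key_down:
  assumes "linear zs"
  shows "(\<forall>b\<in>B. b + z \<in> {x. ereal (- zs x) \<le> sigma_down A zs}) \<longleftrightarrow>
         ereal (- zs z) \<le> sup_diff (sigma_down A zs) (sigma_down B zs)"
proof -
  have e: "ereal (- zs (b + z)) = ereal (- zs b) + ereal (- zs z)" for b
    using assms by (simp add: linear_add)
  show ?thesis unfolding sup_diff_ge sup_add_real sigma_down_def[of B] mem_Collect_eq e SUP_plus_iff ..
qed

lemma D_nonempty:
  assumes "neg_dual_cone C \<noteq> {\<lambda>_. 0}"
  shows "neg_dual_cone C - {\<lambda>_. 0} \<noteq> {}"
proof -
  have "(\<lambda>_. 0) \<in> neg_dual_cone C"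
    unfolding neg_dual_cone_def dual_space_def by (auto intro: linear_zero continuous_on_const)
  thus ?thesis using assms by blast
qed

lemma rep_up:
  fixes C :: "'z::{real_vector, t2_space} set"
  assumes lcs: "locally_convex_tvs TYPE('z)" and cone: "convex_cone C"
    and D: "neg_dual_cone C - {\<lambda>_. 0} \<noteq> {}" and A: "A \<in> Q_up C"
  shows "A = (\<Inter>zs\<in>neg_dual_cone C - {\<lambda>_. 0}. {x. sigma_up A zs \<le> ereal (- zs x)})"
proof
  show "A \<subseteq> (\<Inter>zs\<in>neg_dual_cone C - {\<lambda>_. 0}. {x. sigma_up A zs \<le> ereal (- zs x)})"
    unfolding sigma_up_def by (auto intro: INF_lower)
next
  show "(\<Inter>zs\<in>neg_dual_cone C - {\<lambda>_. 0}. {x. sigma_up A zs \<le> ereal (- zs x)}) \<subseteq> A"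
  proof
    fix p assume p: "p \<in> (\<Inter>zs\<in>neg_dual_cone C - {\<lambda>_. 0}. {x. sigma_up A zs \<le> ereal (- zs x)})"
    show "p \<in> A"
    proof (rule ccontr)
      assume pA: "p \<notin> A"
      define K where "K = convex hull (set_plus_C A C)"
      have AK: "A = closure K" using A unfolding Q_up_def K_def by auto
      show False
      proof (cases "A = {}")
        case True
        obtain zs where "zs \<in> neg_dual_cone C - {\<lambda>_. 0}" using D by auto
        with p have "sigma_up A zs \<le> ereal (- zs p)" by auto
        thus False using True unfolding sigma_up_def by (simp add: top_ereal_def)
      next
        case False
        then obtain a0 where a0: "a0 \<in> A" by auto
        have Kne: "K \<noteq> {}" using False AK by auto
        obtain F :: "'z \<Rightarrow> real" and c where F: "linear F" "continuous_on UNIV F" "\<And>a. a \<in> A \<Longrightarrow> F a \<le> c" "c < F p"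
          using separation[OF lcs _ Kne, of p] pA AK unfolding K_def by (auto simp: convex_convex_hull)
        have CA: "a + x \<in> A" if "a \<in> A" "x \<in> C" for a x
        proof -
          have "a + x \<in> set_plus_C A C" using that unfolding set_plus_C_def by blast
          hence "a + x \<in> K" unfolding K_def by (meson hull_subset subsetD)
          thus ?thesis using AK closure_subset by auto
        qed
        have FC: "F x \<le> 0" if "x \<in> C" for x
        proof (rule ccontr)
          assume "\<not> F x \<le> 0"
          hence Fx: "F x > 0" by simp
          define t where "t = (c - F a0 + 1) / F x"
          have "c - F a0 \<ge> 0" using F(3)[OF a0] by simp
          hence t0: "t \<ge> 0" using Fx unfolding t_def by simp
          have "t *\<^sub>R x \<in> C" using cone t0 that unfolding convex_cone_def conic_def by blast
          hence "F (a0 + t *\<^sub>R x) \<le> c" using F(3) CA a0 by blast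
          moreover have "F (a0 + t *\<^sub>R x) = c + 1" using F(1) Fx unfolding t_def
            by (simp add: linear_add linear_cmul)
          ultimately show False by simp
        qed
        have Fne: "F \<noteq> (\<lambda>_. 0)" using F(3)[OF a0] F(4) by auto
        have "F \<in> neg_dual_cone C - {\<lambda>_. 0}"
          using F(1,2) FC Fne unfolding neg_dual_cone_def dual_space_def by auto
        with p have "sigma_up A F \<le> ereal (- F p)" by auto
        moreover have "ereal (- c) \<le> sigma_up A F" unfolding sigma_up_def
          by (rule INF_greatest) (use F(3) in auto)
        ultimately have "ereal (- c) \<le> ereal (- F p)" by (metis order_trans)
        thus False using F(4) by simp
      qed
    qed
  qed
qed

lemma rep_down:
  fixes C :: "'z::{real_vector, t2_space} set"
  assumes lcs: "locally_convex_tvs TYPE('z)" and cone: "convex_cone C"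
    and D: "neg_dual_cone C - {\<lambda>_. 0} \<noteq> {}" and A: "A \<in> Q_down C"
  shows "A = (\<Inter>zs\<in>neg_dual_cone C - {\<lambda>_. 0}. {x. ereal (- zs x) \<le> sigma_down A zs})"
proof
  show "A \<subseteq> (\<Inter>zs\<in>neg_dual_cone C - {\<lambda>_. 0}. {x. ereal (- zs x) \<le> sigma_down A zs})"
    unfolding sigma_down_def by (auto intro: SUP_upper)
next
  show "(\<Inter>zs\<in>neg_dual_cone C - {\<lambda>_. 0}. {x. ereal (- zs x) \<le> sigma_down A zs}) \<subseteq> A"
  proof
    fix p assume p: "p \<in> (\<Inter>zs\<in>neg_dual_cone C - {\<lambda>_. 0}. {x. ereal (- zs x) \<le> sigma_down A zs})"
    show "p \<in> A"
    proof (rule ccontr)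
      assume pA: "p \<notin> A"
      define K where "K = convex hull (set_minus_C A C)"
      have AK: "A = closure K" using A unfolding Q_down_def K_def by auto
      show False
      proof (cases "A = {}")
        case True
        obtain zs where "zs \<in> neg_dual_cone C - {\<lambda>_. 0}" using D by auto
        with p have "ereal (- zs p) \<le> sigma_down A zs" by auto
        thus False using True unfolding sigma_down_def by (simp add: bot_ereal_def)
      next
        case False
        then obtain a0 where a0: "a0 \<in> A" by auto
        have Kne: "K \<noteq> {}" using False AK by auto
        obtain F :: "'z \<Rightarrow> real" and c where F: "linear F" "continuous_on UNIV F" "\<And>a. a \<in> A \<Longrightarrow> F a \<le> c" "c < F p"
          using separation[OF lcs _ Kne, of p] pA AK unfolding K_def by (auto simp: convex_convex_hull)
        have CA: "a - x \<in> A" if "a \<in> A" "x \<in> C" for a x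
        proof -
          have "a - x \<in> set_minus_C A C" using that unfolding set_minus_C_def by blast
          hence "a - x \<in> K" unfolding K_def by (meson hull_subset subsetD)
          thus ?thesis using AK closure_subset by auto
        qed
        have FC: "- F x \<le> 0" if "x \<in> C" for x
        proof (rule ccontr)
          assume "\<not> - F x \<le> 0"
          hence Fx: "F x < 0" by simp
          define t where "t = (c - F a0 + 1) / (- F x)"
          have "c - F a0 \<ge> 0" using F(3)[OF a0] by simp
          hence t0: "t \<ge> 0" using Fx unfolding t_def by (intro divide_nonneg_pos) auto
          have "t *\<^sub>R x \<in> C" using cone t0 that unfolding convex_cone_def conic_def by blast
          hence "F (a0 - t *\<^sub>R x) \<le> c" using F(3) CA a0 by blast
          moreover have "F (a0 - t *\<^sub>R x) = F a0 - t * F x" using F(1) by (simp add: linear_diff linear_cmul)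
          moreover have "t * F x = - (c - F a0 + 1)" using Fx unfolding t_def by (simp add: field_simps)
          ultimately have "F (a0 - t *\<^sub>R x) = c + 1" by simp
          thus False using \<open>F (a0 - t *\<^sub>R x) \<le> c\<close> by simp
        qed
        have Fne: "(\<lambda>x. - F x) \<noteq> (\<lambda>_. 0)" 
        proof
          assume h: "(\<lambda>x. - F x) = (\<lambda>_. 0)"
          show False using fun_cong[OF h, of a0] fun_cong[OF h, of p] F(3)[OF a0] F(4) by simp
        qed
        have "(\<lambda>x. - F x) \<in> neg_dual_cone C - {\<lambda>_. 0}"
          using F(1,2) FC Fne unfolding neg_dual_cone_def dual_space_def
          by (auto intro: linear_compose_neg continuous_on_minus)
        with p have "ereal (- (- F p)) \<le> sigma_down A (\<lambda>x. - F x)" by blast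
        hence "ereal (F p) \<le> sigma_down A (\<lambda>x. - F x)" by simp
        moreover have "sigma_down A (\<lambda>x. - F x) \<le> ereal c" unfolding sigma_down_def
          by (rule SUP_least) (use F(3) in auto)
        ultimately have "ereal (F p) \<le> ereal c" by (metis order_trans)
        thus False using F(4) by simp
      qed
    qed
  qed
qed

theorem mainTheorem16:
  fixes C :: "'z::{real_vector, t2_space} set"
  assumes lcs: "locally_convex_tvs TYPE('z)"
    and cone: "convex_cone C" and zero: "0 \<in> C"
    and nontriv: "neg_dual_cone C \<noteq> {\<lambda>_. 0}"
  shows
   "(\<forall>A\<in>Q_up C. \<forall>B\<in>Q_up C.
       set_diff A B =
         (\<Inter>zs\<in>neg_dual_cone C - {\<lambda>_. 0}.
            {z. inf_diff (sigma_up A zs) (sigma_up B zs) \<le> ereal (- zs z)}) \<and>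
       (\<forall>zs\<in>neg_dual_cone C - {\<lambda>_. 0}.
          A = {z. sigma_up A zs \<le> ereal (- zs z)} \<longrightarrow>
          set_diff A B = {z. inf_diff (sigma_up A zs) (sigma_up B zs) \<le> ereal (- zs z)}))
    \<and>
    (\<forall>A\<in>Q_down C. \<forall>B\<in>Q_down C.
       set_diff A B =
         (\<Inter>zs\<in>neg_dual_cone C - {\<lambda>_. 0}.
            {z. ereal (- zs z) \<le> sup_diff (sigma_down A zs) (sigma_down B zs)}) \<and>
       (\<forall>zs\<in>neg_dual_cone C - {\<lambda>_. 0}.
          A = {z. ereal (- zs z) \<le> sigma_down A zs} \<longrightarrow>
          set_diff A B = {z. ereal (- zs z) \<le> sup_diff (sigma_down A zs) (sigma_down B zs)}))"
proof -
  let ?D = "neg_dual_cone C - {\<lambda>_. 0}"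
  have D: "?D \<noteq> {}" by (rule D_nonempty[OF nontriv])
  have lin: "linear zs" if "zs \<in> ?D" for zs using that unfolding neg_dual_cone_def dual_space_def by auto
  have partA: "set_diff A B = (\<Inter>zs\<in>?D. {z. inf_diff (sigma_up A zs) (sigma_up B zs) \<le> ereal (- zs z)}) \<and>
       (\<forall>zs\<in>?D. A = {z. sigma_up A zs \<le> ereal (- zs z)} \<longrightarrow>
          set_diff A B = {z. inf_diff (sigma_up A zs) (sigma_up B zs) \<le> ereal (- zs z)})"
    if A: "A \<in> Q_up C" for A B
  proof (intro conjI ballI impI)
    have Aeq: "A = (\<Inter>zs\<in>?D. {x. sigma_up A zs \<le> ereal (- zs x)})" by (rule rep_up[OF lcs cone D A])
    have mem: "x \<in> A \<longleftrightarrow> (\<forall>zs\<in>?D. x \<in> {x. sigma_up A zs \<le> ereal (- zs x)})" for x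
      using arg_cong[OF Aeq, of "\<lambda>S. x \<in> S"] by simp
    show "set_diff A B = (\<Inter>zs\<in>?D. {z. inf_diff (sigma_up A zs) (sigma_up B zs) \<le> ereal (- zs z)})"
    proof (rule set_eqI)
      fix z
      have "z \<in> set_diff A B \<longleftrightarrow> (\<forall>zs\<in>?D. \<forall>b\<in>B. b + z \<in> {x. sigma_up A zs \<le> ereal (- zs x)})"
        unfolding set_diff_iff mem by blast
      also have "\<dots> \<longleftrightarrow> (\<forall>zs\<in>?D. inf_diff (sigma_up A zs) (sigma_up B zs) \<le> ereal (- zs z))"
        using key_up[OF lin] by blast
      finally show "z \<in> set_diff A B \<longleftrightarrow> z \<in> (\<Inter>zs\<in>?D. {z. inf_diff (sigma_up A zs) (sigma_up B zs) \<le> ereal (- zs z)})"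
        by simp
    qed
  next
    fix zs assume zs: "zs \<in> ?D" and Aeq: "A = {z. sigma_up A zs \<le> ereal (- zs z)}"
    have mem: "x \<in> A \<longleftrightarrow> x \<in> {x. sigma_up A zs \<le> ereal (- zs x)}" for x
      using arg_cong[OF Aeq, of "\<lambda>S. x \<in> S"] by simp
    show "set_diff A B = {z. inf_diff (sigma_up A zs) (sigma_up B zs) \<le> ereal (- zs z)}"
    proof (rule set_eqI)
      fix z
      show "z \<in> set_diff A B \<longleftrightarrow> z \<in> {z. inf_diff (sigma_up A zs) (sigma_up B zs) \<le> ereal (- zs z)}"
        unfolding set_diff_iff mem using key_up[OF lin[OF zs], of B z A] by simp
    qed
  qed
  have partB: "set_diff A B = (\<Inter>zs\<in>?D. {z. ereal (- zs z) \<le> sup_diff (sigma_down A zs) (sigma_down B zs)}) \<and>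
       (\<forall>zs\<in>?D. A = {z. ereal (- zs z) \<le> sigma_down A zs} \<longrightarrow>
          set_diff A B = {z. ereal (- zs z) \<le> sup_diff (sigma_down A zs) (sigma_down B zs)})"
    if A: "A \<in> Q_down C" for A B
  proof (intro conjI ballI impI)
    have Aeq: "A = (\<Inter>zs\<in>?D. {x. ereal (- zs x) \<le> sigma_down A zs})" by (rule rep_down[OF lcs cone D A])
    have mem: "x \<in> A \<longleftrightarrow> (\<forall>zs\<in>?D. x \<in> {x. ereal (- zs x) \<le> sigma_down A zs})" for x
      using arg_cong[OF Aeq, of "\<lambda>S. x \<in> S"] by simp
    show "set_diff A B = (\<Inter>zs\<in>?D. {z. ereal (- zs z) \<le> sup_diff (sigma_down A zs) (sigma_down B zs)})"
    proof (rule set_eqI)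
      fix z
      have "z \<in> set_diff A B \<longleftrightarrow> (\<forall>zs\<in>?D. \<forall>b\<in>B. b + z \<in> {x. ereal (- zs x) \<le> sigma_down A zs})"
        unfolding set_diff_iff mem by blast
      also have "\<dots> \<longleftrightarrow> (\<forall>zs\<in>?D. ereal (- zs z) \<le> sup_diff (sigma_down A zs) (sigma_down B zs))"
        using key_down[OF lin] by blast
      finally show "z \<in> set_diff A B \<longleftrightarrow> z \<in> (\<Inter>zs\<in>?D. {z. ereal (- zs z) \<le> sup_diff (sigma_down A zs) (sigma_down B zs)})"
        by simp
    qed
  next
    fix zs assume zs: "zs \<in> ?D" and Aeq: "A = {z. ereal (- zs z) \<le> sigma_down A zs}"
    have mem: "x \<in> A \<longleftrightarrow> x \<in> {x. ereal (- zs x) \<le> sigma_down A zs}" for x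
      using arg_cong[OF Aeq, of "\<lambda>S. x \<in> S"] by simp
    show "set_diff A B = {z. ereal (- zs z) \<le> sup_diff (sigma_down A zs) (sigma_down B zs)}"
    proof (rule set_eqI)
      fix z
      show "z \<in> set_diff A B \<longleftrightarrow> z \<in> {z. ereal (- zs z) \<le> sup_diff (sigma_down A zs) (sigma_down B zs)}"
        unfolding set_diff_iff mem using key_down[OF lin[OF zs], of B z A] by simp
    qed
  qed
  show ?thesis using partA partB by blast
qed


end
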